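(* Let $u\in[-1,1]^k$, and let $\pi$ be a permutation of $[k]$ and $y\in\mathcal{Y}$ with $u\in P_{\pi,y}$. Then $V^u_{\pi,y}:=\{\mathbbm{1}_{\pi,i}\odot y: i\in\{0,\dots,k\},\ \alpha_i(|u|)\neq0\}$ is a subset of $V_{\pi,y}$ with $u\in\mathrm{conv}(V^u_{\pi,y})$, and it has the smallest cardinality among all subsets $W\subseteq V_{\pi,y}$ with $u\in\mathrm{conv}(W)$.
   Context: $[k]=\{1,\dots,k\}$, $\mathcal{Y}=\{-1,1\}^k$; $\odot$ entrywise product, $|u|$ entrywise absolute value. For $i\in\{0,\dots,k\}$, $\mathbbm{1}_{\pi,i}$ is the indicator vector of $\{\pi_1,\dots,\pi_i\}$ ($\mathbbm{1}_{\pi,0}=0$); $V_{\pi,y}=\{\mathbbm{1}_{\pi,i}\odot y:i=0,\dots,k\}$ and $P_{\pi,y}=\mathrm{conv}(V_{\pi,y})$. For $x\in\mathbb{R}^k_+$ ordered by $\pi$ (i.e. $x_{\pi_1}\ge\dots\ge x_{\pi_k}$), $\alpha_0(x)=1-x_{\pi_1}$, $\alpha_i(x)=x_{\pi_i}-x_{\pi_{i+1}}$ for $1\le i\le k-1$, and $\alpha_k(x)=x_{\pi_k}$, so that $x=\sum_{i=0}^k\alpha_i(x)\mathbbm{1}_{\pi,i}$. *)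

theory Defs
  imports "HOL-Analysis.Analysis"
begin

text \<open>Coordinates are indexed by a finite type 'n with k = CARD('n).
  A permutation pi of [k] is a bijection from {1..k} onto the index type;
  p i is the i-th element pi_i.\<close>

definition is_perm :: "(nat \<Rightarrow> 'n::finite) \<Rightarrow> bool" where
  "is_perm p \<longleftrightarrow> bij_betw p {1..CARD('n)} UNIV"

definition sign_vec :: "real^'n \<Rightarrow> bool" where
  "sign_vec y \<longleftrightarrow> (\<forall>j. y$j = -1 \<or> y$j = 1)"

definition ind :: "(nat \<Rightarrow> 'n::finite) \<Rightarrow> nat \<Rightarrow> real^'n" where
  "ind p i = (\<chi> j. if j \<in> p ` {1..i} then 1 else 0)"

definition emul :: "real^'n \<Rightarrow> real^'n \<Rightarrow> real^'n" where
  "emul a b = (\<chi> j. a$j * b$j)"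

definition vabs :: "real^'n \<Rightarrow> real^'n" where
  "vabs u = (\<chi> j. \<bar>u$j\<bar>)"

definition Vset :: "(nat \<Rightarrow> 'n::finite) \<Rightarrow> real^'n \<Rightarrow> (real^'n) set" where
  "Vset p y = {emul (ind p i) y | i. i \<le> CARD('n)}"

definition Pset :: "(nat \<Rightarrow> 'n::finite) \<Rightarrow> real^'n \<Rightarrow> (real^'n) set" where
  "Pset p y = convex hull (Vset p y)"

definition alpha :: "(nat \<Rightarrow> 'n::finite) \<Rightarrow> real^'n \<Rightarrow> nat \<Rightarrow> real" where
  "alpha p x i =
     (if i = 0 then 1 - x $ p 1
      else if i < CARD('n) then x $ p i - x $ p (i+1)
      else x $ p (CARD('n)))"

definition Vu :: "(nat \<Rightarrow> 'n::finite) \<Rightarrow> real^'n \<Rightarrow> real^'n \<Rightarrow> (real^'n) set" where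
  "Vu p y u = {emul (ind p i) y | i. i \<le> CARD('n) \<and> alpha p (vabs u) i \<noteq> 0}"

end

theory Submission
  imports Defs
begin

lemma ind_coord:
  fixes p :: "nat \<Rightarrow> 'n::finite"
  assumes "is_perm p" "1 \<le> m" "m \<le> CARD('n)" "i \<le> CARD('n)"
  shows "ind p i $ p m = (if m \<le> i then 1 else 0)"
proof -
  have inj: "inj_on p {1..CARD('n)}" using assms(1) unfolding is_perm_def by (rule bij_betw_imp_inj_on)
  have "p m \<in> p ` {1..i} \<longleftrightarrow> m \<in> {1..i}"
    by (rule inj_on_image_mem_iff[OF inj]) (use assms in auto)
  then show ?thesis using assms(2) unfolding ind_def by auto
qed

lemma perm_surj:
  fixes p :: "nat \<Rightarrow> 'n::finite"
  assumes "is_perm p"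
  shows "\<exists>m\<in>{1..CARD('n)}. j = p m"
proof -
  have "p ` {1..CARD('n)} = UNIV" using assms unfolding is_perm_def by (rule bij_betw_imp_surj_on)
  then show ?thesis by (metis UNIV_I imageE)
qed

lemma emul_nth: "emul a b $ j = a $ j * b $ j"
  unfolding emul_def by simp

lemma f_inj:
  fixes p :: "nat \<Rightarrow> 'n::finite"
  assumes "is_perm p" "sign_vec y"
  shows "inj_on (\<lambda>i. emul (ind p i) y) {..CARD('n)}"
proof (rule inj_onI)
  fix i j assume i: "i \<in> {..CARD('n)}" and j: "j \<in> {..CARD('n)}"
    and e: "emul (ind p i) y = emul (ind p j) y"
  show "i = j"
  proof (rule ccontr)
    assume "i \<noteq> j"
    then consider "i < j" | "j < i" by linarith
    then show False
    proof cases
      case 1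
      have "emul (ind p i) y $ p j = emul (ind p j) y $ p j" using e by simp
      moreover have "y $ p j \<noteq> 0" using assms(2) unfolding sign_vec_def by (metis zero_neq_neg_one zero_neq_one)
      ultimately show False using 1 i j ind_coord[OF assms(1), of j i] ind_coord[OF assms(1), of j j]
        by (auto simp: emul_nth)
    next
      case 2
      have "emul (ind p i) y $ p i = emul (ind p j) y $ p i" using e by simp
      moreover have "y $ p i \<noteq> 0" using assms(2) unfolding sign_vec_def by (metis zero_neq_neg_one zero_neq_one)
      ultimately show False using 2 i j ind_coord[OF assms(1), of i i] ind_coord[OF assms(1), of i j]
        by (auto simp: emul_nth)
    qed
  qed
qed

lemma Vset_eq: "Vset p y = (\<lambda>i. emul (ind p i) y) ` {..CARD('n)}"
  for p :: "nat \<Rightarrow> 'n::finite"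
  unfolding Vset_def by auto

lemma key:
  fixes u y :: "real^'n::finite" and p :: "nat \<Rightarrow> 'n"
  assumes perm: "is_perm p" and sv: "sign_vec y"
    and W: "W \<subseteq> Vset p y" and uW: "u \<in> convex hull W"
  shows "\<exists>l. (\<forall>i\<le>CARD('n). 0 \<le> l i) \<and> (\<forall>i\<le>CARD('n). l i \<noteq> 0 \<longrightarrow> emul (ind p i) y \<in> W)
     \<and> (\<forall>i\<le>CARD('n). alpha p (vabs u) i = l i)
     \<and> u = (\<Sum>i\<le>CARD('n). l i *\<^sub>R emul (ind p i) y) \<and> (\<Sum>i\<le>CARD('n). l i) = 1"
proof -
  define k where "k = CARD('n)"
  define f where "f = (\<lambda>i. emul (ind p i) y)"
  have finW: "finite W" using W Vset_eq[of p y] by (metis finite_atMost finite_imageI finite_subset)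
  obtain c where c0: "\<forall>x\<in>W. 0 \<le> c x" and c1: "sum c W = 1" and cu: "(\<Sum>x\<in>W. c x *\<^sub>R x) = u"
    using uW convex_hull_finite[OF finW] by auto
  define I where "I = {i\<in>{..k}. f i \<in> W}"
  have WI: "W = f ` I" using W unfolding I_def f_def k_def Vset_eq by auto
  have injI: "inj_on f I" using f_inj[OF perm sv] unfolding I_def f_def k_def by (rule inj_on_subset) auto
  define l where "l i = (if f i \<in> W then c (f i) else 0)" for i
  have l0: "0 \<le> l i" for i using c0 unfolding l_def by auto
  have lW: "l i \<noteq> 0 \<Longrightarrow> f i \<in> W" for i unfolding l_def by (auto split: if_splits)
  have sumI: "sum g (f ` I) = (\<Sum>i\<le>k. if f i \<in> W then g (f i) else 0)" for g :: "real^'n \<Rightarrow> 'b::comm_monoid_add"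
    using sum.reindex[OF injI, of g] sum.inter_filter[of "{..k}" "\<lambda>i. g (f i)" "\<lambda>i. f i \<in> W"]
    unfolding I_def by simp
  have l1: "(\<Sum>i\<le>k. l i) = 1"
    using c1 sumI[of c] unfolding WI l_def by simp
  have lu: "u = (\<Sum>i\<le>k. l i *\<^sub>R f i)"
    using cu sumI[of "\<lambda>x. c x *\<^sub>R x"] unfolding WI l_def by (auto intro: sum.cong)
  have coord: "vabs u $ p m = (\<Sum>i\<in>{m..k}. l i)" if m: "1 \<le> m" "m \<le> k" for m
  proof -
    have "u $ p m = (\<Sum>i\<le>k. l i * (f i $ p m))" using lu by simp
    also have "\<dots> = (\<Sum>i\<le>k. if m \<le> i then l i * y $ p m else 0)"
      by (rule sum.cong) (use m ind_coord[OF perm] in \<open>auto simp: f_def emul_nth k_def\<close>)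
    also have "\<dots> = (\<Sum>i\<in>{i\<in>{..k}. m \<le> i}. l i * y $ p m)"
      by (rule sum.inter_filter[symmetric]) simp
    also have "{i\<in>{..k}. m \<le> i} = {m..k}" by auto
    finally have "u $ p m = (\<Sum>i\<in>{m..k}. l i) * y $ p m" by (simp add: sum_distrib_right)
    moreover have "\<bar>y $ p m\<bar> = 1" using sv unfolding sign_vec_def by (metis abs_1 abs_minus_cancel)
    moreover have "0 \<le> (\<Sum>i\<in>{m..k}. l i)" using l0 by (simp add: sum_nonneg)
    ultimately show ?thesis unfolding vabs_def by (simp add: abs_mult)
  qed
  have k1: "1 \<le> k" unfolding k_def by (simp add: Suc_leI)
  have al: "alpha p (vabs u) i = l i" if i: "i \<le> k" for i
  proof (cases "i = 0")
    case True
    have "(\<Sum>i\<le>k. l i) = l 0 + (\<Sum>i\<in>{1..k}. l i)"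
      using k1 by (simp add: atMost_atLeast0 sum.atLeast_Suc_atMost)
    then show ?thesis using True l1 coord[of 1] k1 unfolding alpha_def k_def by simp
  next
    case False
    show ?thesis
    proof (cases "i < k")
      case True
      have "(\<Sum>j\<in>{i..k}. l j) = l i + (\<Sum>j\<in>{Suc i..k}. l j)"
        using True by (simp add: sum.atLeast_Suc_atMost)
      then show ?thesis using False True coord[of i] coord[of "i+1"] unfolding alpha_def k_def by simp
    next
      case F2: False
      then have "i = k" using i by simp
      then show ?thesis using False coord[of k] k1 unfolding alpha_def k_def by simp
    qed
  qed
  show ?thesis
    apply (rule exI[of _ l])
    using l0 lW al lu l1 unfolding f_def k_def by auto
qed

theorem lemma11:
  fixes u y :: "real^'n::finite" and p :: "nat \<Rightarrow> 'n"
  assumes "\<forall>j. \<bar>u$j\<bar> \<le> 1"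
    and "is_perm p"
    and "sign_vec y"
    and "u \<in> Pset p y"
  shows "Vu p y u \<subseteq> Vset p y \<and> u \<in> convex hull (Vu p y u) \<and>
         (\<forall>W. W \<subseteq> Vset p y \<and> u \<in> convex hull W \<longrightarrow> card (Vu p y u) \<le> card W)"
proof (intro conjI allI impI)
  show sub: "Vu p y u \<subseteq> Vset p y" unfolding Vu_def Vset_def by auto
  obtain l where l0: "\<forall>i\<le>CARD('n). 0 \<le> l i"
     and al: "\<forall>i\<le>CARD('n). alpha p (vabs u) i = l i"
     and lu: "u = (\<Sum>i\<le>CARD('n). l i *\<^sub>R emul (ind p i) y)" and l1: "(\<Sum>i\<le>CARD('n). l i) = 1"
    using key[OF assms(2,3) order_refl, of u] assms(4) unfolding Pset_def by blast
  define S where "S = {i\<in>{..CARD('n)}. l i \<noteq> 0}"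
  have "u = (\<Sum>i\<in>S. l i *\<^sub>R emul (ind p i) y)"
    unfolding lu S_def by (rule sum.mono_neutral_right) auto
  moreover have "(\<Sum>i\<in>S. l i *\<^sub>R emul (ind p i) y) \<in> convex hull (Vu p y u)"
  proof (rule convex_sum[OF _ convex_convex_hull])
    show "finite S" unfolding S_def by simp
    show "\<And>i. i \<in> S \<Longrightarrow> 0 \<le> l i" using l0 unfolding S_def by auto
    show "sum l S = 1" unfolding S_def using l1 by (metis (mono_tags, lifting) DiffD2 finite_atMost mem_Collect_eq subsetI sum.mono_neutral_right Diff_iff)
    show "\<And>i. i \<in> S \<Longrightarrow> emul (ind p i) y \<in> convex hull Vu p y u"
      by (rule hull_inc) (use al in \<open>auto simp: S_def Vu_def\<close>)
  qed
  ultimately show "u \<in> convex hull (Vu p y u)" by simp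
  fix W assume WW: "W \<subseteq> Vset p y \<and> u \<in> convex hull W"
  have finW: "finite W" using WW Vset_eq[of p y] by (metis finite_atMost finite_imageI finite_subset)
  obtain m where m: "\<forall>i\<le>CARD('n). m i \<noteq> 0 \<longrightarrow> emul (ind p i) y \<in> W"
     and am: "\<forall>i\<le>CARD('n). alpha p (vabs u) i = m i"
    using key[OF assms(2,3), of W u] WW by blast
  have "Vu p y u \<subseteq> W" unfolding Vu_def using m am by auto
  then show "card (Vu p y u) \<le> card W" using finW by (rule card_mono[rotated])
qed

end
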